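(* Let $L_5=\{-3,-2,-1,0,1\}$ with its natural linear order. Define the games $\star=\{-1\mid -3\}$, and for any game $G$: $\mathsf{M}(G)=\{1\mid G\}$, $\mathsf{P}(G)=\{G\mid -2\}$, $\mathsf{P}_\star(G)=\{G\mid \star\}$. For $n\in\mathbb{N}$ let $\mathsf{P}_n(G)=\mathsf{P}(G)$ if $n$ is odd and $\mathsf{P}_n(G)=\mathsf{P}_\star(G)$ if $n$ is even. Define $G_0=0$ (the atomic game $[0]$) and $G_{n+1}=\mathsf{M}(\mathsf{P}_n(G_n))$. Then for every $n\ge 0$, $G_n\le G_{n+1}$.
   Context: Games over a poset $A$ of atoms are defined inductively: for each $a\in A$, $[a]$ is a game (atomic; often written simply $a$); whenever $L,R$ are non-empty sets of games, $\{L\mid R\}$ is a game (composite), with left options the elements of $L$ and right options the elements of $R$; $\{G_1,\dots,G_n\mid H_1,\dots,H_m\}$ denotes $\{\{G_1,\dots,G_n\}\mid\{H_1,\dots,H_m\}\}$. Relations $\le$ and $\lhd$ on games are defined by mutual recursion: $G\le H$ iff (1) every left option $G^L$ of $G$ satisfies $G^L\lhd H$, (2) every right option $H^R$ of $H$ satisfies $G\lhd H^R$, and (3) if $G$ or $H$ is atomic then $G\lhd H$. $G\lhd H$ iff (1) some right option $G^R$ of $G$ satisfies $G^R\le H$, or (2) some left option $H^L$ of $H$ satisfies $G\le H^L$, or (3) $G=[a]$, $H=[b]$ are atomic with $a\le b$ in $A$. *)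

theory Defs
  imports Main "HOL-Library.FSet"
begin

text \<open>Games over a poset of atoms. Options are finite sets (all games in the
statement are finite); the composite constructor is meant to be used with
non-empty option sets.\<close>

datatype 'a game = Atom 'a | Comp "'a game fset" "'a game fset"

fun lefts :: "'a game \<Rightarrow> 'a game fset" where
  "lefts (Atom a) = {||}"
| "lefts (Comp L R) = L"

fun rights :: "'a game \<Rightarrow> 'a game fset" where
  "rights (Atom a) = {||}"
| "rights (Comp L R) = R"

fun is_atom :: "'a game \<Rightarrow> bool" where
  "is_atom (Atom a) = True"
| "is_atom (Comp L R) = False"

text \<open>All recursive occurrences are positive and the recursion is well-founded, so
the inductive (least fixed point) definition coincides with the recursive one.\<close>

inductive game_le :: "'a::order game \<Rightarrow> 'a game \<Rightarrow> bool"
  and game_lf :: "'a::order game \<Rightarrow> 'a game \<Rightarrow> bool" where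
  le_intro: "\<lbrakk>\<forall>GL. GL |\<in>| lefts G \<longrightarrow> game_lf GL H;
              \<forall>HR. HR |\<in>| rights H \<longrightarrow> game_lf G HR;
              (is_atom G \<or> is_atom H) \<longrightarrow> game_lf G H\<rbrakk> \<Longrightarrow> game_le G H"
| lf_right: "\<lbrakk>GR |\<in>| rights G; game_le GR H\<rbrakk> \<Longrightarrow> game_lf G H"
| lf_left: "\<lbrakk>HL |\<in>| lefts H; game_le G HL\<rbrakk> \<Longrightarrow> game_lf G H"
| lf_atom: "a \<le> b \<Longrightarrow> game_lf (Atom a) (Atom b)"

text \<open>Atoms: L5 = {-3,-2,-1,0,1} realised as integers (order = restriction of int order).\<close>

definition star :: "int game" where
  "star = Comp {|Atom (-1)|} {|Atom (-3)|}"

definition gM :: "int game \<Rightarrow> int game" where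
  "gM G = Comp {|Atom 1|} {|G|}"

definition gP :: "int game \<Rightarrow> int game" where
  "gP G = Comp {|G|} {|Atom (-2)|}"

definition gPstar :: "int game \<Rightarrow> int game" where
  "gPstar G = Comp {|G|} {|star|}"

definition gPn :: "nat \<Rightarrow> int game \<Rightarrow> int game" where
  "gPn n G = (if odd n then gP G else gPstar G)"

fun Gseq :: "nat \<Rightarrow> int game" where
  "Gseq 0 = Atom 0"
| "Gseq (Suc n) = gM (gPn n (Gseq n))"

end

theory Submission
  imports Defs
begin

lemma game_le_refl: "game_le (G::'a::order game) G"
proof (induction G)
  case (Atom a)
  show ?case
    by (rule le_intro) (simp_all add: lf_atom)
next
  case (Comp L R)
  show ?case
  proof (rule le_intro)
    show "\<forall>GL. GL |\<in>| lefts (Comp L R) \<longrightarrow> game_lf GL (Comp L R)"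
    proof (intro allI impI)
      fix GL assume h: "GL |\<in>| lefts (Comp L R)"
      then have "GL |\<in>| L" by simp
      then show "game_lf GL (Comp L R)"
      proof -
        have "game_le GL GL" using Comp.IH(1) \<open>GL |\<in>| L\<close> by simp
        then show ?thesis using lf_left[of GL "Comp L R" GL] \<open>GL |\<in>| L\<close> by simp
      qed
    qed
    show "\<forall>HR. HR |\<in>| rights (Comp L R) \<longrightarrow> game_lf (Comp L R) HR"
    proof (intro allI impI)
      fix HR assume h: "HR |\<in>| rights (Comp L R)"
      then have "HR |\<in>| R" by simp
      then show "game_lf (Comp L R) HR"
      proof -
        have "game_le HR HR" using Comp.IH(2) \<open>HR |\<in>| R\<close> by simp
        then show ?thesis using lf_right[of HR "Comp L R" HR] \<open>HR |\<in>| R\<close> by simp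
      qed
    qed
  qed simp
qed

theorem lemma3p2:
  fixes n :: nat
  shows "game_le (Gseq n) (Gseq (Suc n))"
proof -
  have eq: "Gseq (Suc n) = Comp {|Atom 1|} {|gPn n (Gseq n)|}"
    by (simp add: gM_def)
  have one: "game_lf (Atom 1) (Gseq (Suc n))"
    using lf_left[of "Atom 1" "Gseq (Suc n)" "Atom 1"] game_le_refl[of "Atom (1::int)"]
    unfolding eq by simp
  have "Gseq n |\<in>| lefts (gPn n (Gseq n))"
    by (simp add: gPn_def gP_def gPstar_def)
  then have opt: "game_lf (Gseq n) (gPn n (Gseq n))"
    using lf_left[of "Gseq n" "gPn n (Gseq n)" "Gseq n"] game_le_refl[of "Gseq n"] by simp
  have r: "\<forall>HR. HR |\<in>| rights (Gseq (Suc n)) \<longrightarrow> game_lf (Gseq n) HR"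
    unfolding eq using opt by simp
  show ?thesis
  proof (cases n)
    case 0
    have z: "game_le (Atom (0::int)) (Atom 1)"
      by (rule le_intro) (simp_all add: lf_atom)
    have a: "game_lf (Atom 0) (Gseq (Suc n))"
      using lf_left[of "Atom 1" "Gseq (Suc n)" "Atom 0"] z unfolding eq by simp
    show ?thesis
      by (rule le_intro) (use a r 0 in simp_all)
  next
    case (Suc m)
    have l: "\<forall>GL. GL |\<in>| lefts (Gseq n) \<longrightarrow> game_lf GL (Gseq (Suc n))"
      using one Suc by (simp add: gM_def)
    have na: "\<not> is_atom (Gseq n)" "\<not> is_atom (Gseq (Suc n))"
      using Suc eq by (simp_all add: gM_def)
    show ?thesis
      by (rule le_intro) (use l r na in simp_all)
  qed
qed

end
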